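(* Let $n,m\geq1$, $\mathbf{S}\in\mathbb{R}^{n\times m}$, let $\mathbf{w}$ be a random vector in $\mathbb{R}^n$ with logconcave density $p_{\mathbf{w}}$ and law $P_{\mathbf{w}}$, and let $Q:\mathbb{R}^n\to\mathcal{Z}$ be a convex quantizer. For $z\in\mathcal{Z}$ consider the quantized-data likelihood $\mathcal{L}(\mathbf{x},\boldsymbol{\Psi};z)=P_{\mathbf{w}}[\mathcal{W}(z,\mathbf{x},\boldsymbol{\Psi})]$ of the model $z=Q(\boldsymbol{\Psi}^{-1}(\mathbf{S}\mathbf{x}+\mathbf{w}))$. Then for every $z\in\mathcal{Z}$: (a) for each fixed $\boldsymbol{\Psi}_0\in\mathcal{P}_n$, the map $\mathbf{x}\mapsto\mathcal{L}(\mathbf{x},\boldsymbol{\Psi}_0;z)$ is logconcave on $\mathbb{R}^m$; (b) the map $(\mathbf{x},\psi)\mapsto\mathcal{L}(\mathbf{x},\psi\mathbf{I}_n;z)$ is jointly logconcave on $\mathbb{R}^m\times(0,\infty)$; (c) if moreover every quantization region is a box, i.e. for every $z\in\mathcal{Z}$ there are $a_j(z)\le b_j(z)$ in $\mathbb{R}\cup\{-\infty,+\infty\}$ with $Q^{-1}(z)=\prod_{j=1}^n[a_j(z),b_j(z)]$ (intervals intersected with $\mathbb{R}$), then $(\mathbf{x},\boldsymbol{\Lambda})\mapsto\mathcal{L}(\mathbf{x},\boldsymbol{\Lambda};z)$ is jointly logconcave on $\mathbb{R}^m\times\{\text{diagonal } n\times n \text{ matrices with positive diagonal entries}\}$. Here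 a function $f$ on a convex set $D$ is logconcave if $f(\alpha u_1+(1-\alpha)u_0)\ge f(u_1)^\alpha f(u_0)^{1-\alpha}$ for all $u_0,u_1\in D$, $\alpha\in[0,1]$.
   Context: $\mathcal{P}_n$ denotes the set of $n\times n$ real symmetric positive-definite matrices; $\mathbf{I}_n$ is the identity. A density $p_{\mathbf{w}}$ on $\mathbb{R}^n$ is logconcave if $p_{\mathbf{w}}(\alpha\mathbf{w}_1+(1-\alpha)\mathbf{w}_0)\geq p_{\mathbf{w}}(\mathbf{w}_1)^{\alpha}p_{\mathbf{w}}(\mathbf{w}_0)^{1-\alpha}$ for all $\alpha\in[0,1]$, $\mathbf{w}_0,\mathbf{w}_1\in\mathbb{R}^n$; $P_{\mathbf{w}}$ is the probability measure with density $p_{\mathbf{w}}$. A quantizer is any map $Q:\mathbb{R}^n\to\mathcal{Z}$ with $\mathcal{Z}$ countable; it is a convex quantizer if $Q^{-1}(z)$ is a convex set for every $z\in\mathcal{Z}$. For $z\in\mathcal{Z}$, $\mathbf{x}\in\mathbb{R}^m$, $\boldsymbol{\Psi}\in\mathcal{P}_n$, define the noise region $\mathcal{W}(z,\mathbf{x},\boldsymbol{\Psi}):=\{\mathbf{w}\in\mathbb{R}^n:\boldsymbol{\Psi}^{-1}(\mathbf{S}\mathbf{x}+\mathbf{w})\in Q^{-1}(z)\}=\{\boldsymbol{\Psi}\mathbf{y}-\mathbf{S}\mathbf{x}:\mathbf{y}\in Q^{-1}(z)\}$. *)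

theory Defs
  imports "HOL-Analysis.Analysis" "HOL-Library.Extended_Real"
begin

definition logconcave_on :: "'a::real_vector set \<Rightarrow> ('a \<Rightarrow> real) \<Rightarrow> bool" where
  "logconcave_on D f \<longleftrightarrow>
     (\<forall>u0\<in>D. \<forall>u1\<in>D. \<forall>\<alpha>\<in>{0..1::real}.
        f (\<alpha> *\<^sub>R u1 + (1 - \<alpha>) *\<^sub>R u0) \<ge> f u1 powr \<alpha> * f u0 powr (1 - \<alpha>))"

definition pos_def_mats :: "(real^'n^'n) set" where
  "pos_def_mats = {A. transpose A = A \<and> (\<forall>v. v \<noteq> 0 \<longrightarrow> v \<bullet> (A *v v) > 0)}"

definition pos_diag_mats :: "(real^'n^'n) set" where
  "pos_diag_mats = {A. (\<forall>i j. i \<noteq> j \<longrightarrow> A $ i $ j = 0) \<and> (\<forall>i. A $ i $ i > 0)}"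

definition convex_quantizer :: "(real^'n \<Rightarrow> 'z::countable) \<Rightarrow> bool" where
  "convex_quantizer Q \<longleftrightarrow> (\<forall>z. convex (Q -` {z}))"

definition noise_region ::
  "(real^'n \<Rightarrow> 'z) \<Rightarrow> real^'m^'n \<Rightarrow> 'z \<Rightarrow> real^'m \<Rightarrow> real^'n^'n \<Rightarrow> (real^'n) set" where
  "noise_region Q S z x \<Psi> = {w. matrix_inv \<Psi> *v (S *v x + w) \<in> Q -` {z}}"

text \<open>Law of w: probability measure with density p (on the Lebesgue sigma-algebra, so that
  convex sets are measurable).\<close>
definition law :: "(real^'n \<Rightarrow> real) \<Rightarrow> (real^'n) measure" where
  "law p = density lebesgue (\<lambda>w. ennreal (p w))"

definition likelihood ::
  "(real^'n \<Rightarrow> real) \<Rightarrow> (real^'n \<Rightarrow> 'z) \<Rightarrow> real^'m^'n \<Rightarrow> 'z \<Rightarrow> real^'m \<Rightarrow> real^'n^'n \<Rightarrow> real" where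
  "likelihood p Q S z x \<Psi> = measure (law p) (noise_region Q S z x \<Psi>)"

end

theory Submission
  imports Defs
begin

lemma emeasure_lborel_Ioi_top: "emeasure lborel {0::real<..} = top"
proof -
  have le: "ennreal n \<le> emeasure lborel {0::real<..}" if "n \<ge> 0" for n::real
    using emeasure_mono[of "{0<..n}" "{0<..}" lborel] that by (auto simp: subset_eq)
  show ?thesis
  proof (cases "emeasure lborel {0::real<..}" rule: ennreal_cases)
    case (real r)
    with le[of "r+1"] show ?thesis by (simp add: ennreal_le_iff)
  qed simp
qed

lemma emeasure_pos_le:
  fixes v :: ennreal
  shows "emeasure lborel {t::real. 0 < t \<and> ennreal t \<le> v} = v"
proof (cases v)
  case (real r)
  then have "{t::real. 0 < t \<and> ennreal t \<le> v} = {0<..r}"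
    by (auto simp: ennreal_le_iff)
  then show ?thesis using real by simp
next
  case top
  then have "{t::real. 0 < t \<and> ennreal t \<le> v} = {0<..}" by auto
  then show ?thesis using top emeasure_lborel_Ioi_top by simp
qed

lemma emeasure_pos_less:
  fixes v :: ennreal
  shows "emeasure lborel {t::real. 0 < t \<and> ennreal t < v} = v"
proof (cases v)
  case (real r)
  then have "{t::real. 0 < t \<and> ennreal t < v} = {0<..<r}"
    by (auto simp: ennreal_less_iff)
  then show ?thesis using real by simp
next
  case top
  then have "{t::real. 0 < t \<and> ennreal t < v} = {0<..}" by auto
  then show ?thesis using top emeasure_lborel_Ioi_top by simp
qed

lemma layer_ge:
  fixes h :: "real \<Rightarrow> ennreal"
  assumes [measurable]: "h \<in> borel_measurable borel"
  shows "(\<integral>\<^sup>+x. h x \<partial>lborel) = (\<integral>\<^sup>+t. indicator {0<..} t * emeasure lborel {x. ennreal t \<le> h x} \<partial>lborel)"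
proof -
  let ?S = "{p::real\<times>real. 0 < snd p \<and> ennreal (snd p) \<le> h (fst p)}"
  have P: "Measurable.pred (lborel \<Otimes>\<^sub>M lborel) (\<lambda>p::real\<times>real. 0 < snd p \<and> ennreal (snd p) \<le> h (fst p))" by measurable
  have S[measurable]: "?S \<in> sets (lborel \<Otimes>\<^sub>M lborel)" using P unfolding pred_def by (simp add: space_pair_measure)
  have "(\<integral>\<^sup>+x. h x \<partial>lborel) = (\<integral>\<^sup>+x. \<integral>\<^sup>+t. indicator ?S (x,t) \<partial>lborel \<partial>lborel)"
  proof (rule nn_integral_cong)
    fix x
    have "(\<integral>\<^sup>+t. indicator ?S (x,t) \<partial>lborel) = (\<integral>\<^sup>+t. indicator {t. 0 < t \<and> ennreal t \<le> h x} t \<partial>lborel)"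
      by (auto intro!: nn_integral_cong simp: indicator_def)
    also have "\<dots> = h x" by (subst nn_integral_indicator) (auto simp: emeasure_pos_le)
    finally show "h x = (\<integral>\<^sup>+t. indicator ?S (x,t) \<partial>lborel)" by simp
  qed
  also have "\<dots> = (\<integral>\<^sup>+t. \<integral>\<^sup>+x. indicator ?S (x,t) \<partial>lborel \<partial>lborel)"
    by (rule lborel_pair.Fubini') measurable
  also have "\<dots> = (\<integral>\<^sup>+t. indicator {0<..} t * emeasure lborel {x. ennreal t \<le> h x} \<partial>lborel)"
  proof (rule nn_integral_cong)
    fix t
    have "(\<integral>\<^sup>+x. indicator ?S (x,t) \<partial>lborel) = (\<integral>\<^sup>+x. indicator {0<..} t * indicator {x. ennreal t \<le> h x} x \<partial>lborel)"
      by (auto intro!: nn_integral_cong simp: indicator_def)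
    also have "\<dots> = indicator {0<..} t * emeasure lborel {x. ennreal t \<le> h x}"
      by (subst nn_integral_cmult) auto
    finally show "(\<integral>\<^sup>+x. indicator ?S (x,t) \<partial>lborel) = indicator {0<..} t * emeasure lborel {x. ennreal t \<le> h x}" .
  qed
  finally show ?thesis .
qed

lemma layer_less:
  fixes h :: "real \<Rightarrow> ennreal"
  assumes [measurable]: "h \<in> borel_measurable borel"
  shows "(\<integral>\<^sup>+x. h x \<partial>lborel) = (\<integral>\<^sup>+t. indicator {0<..} t * emeasure lborel {x. ennreal t < h x} \<partial>lborel)"
proof -
  let ?S = "{p::real\<times>real. 0 < snd p \<and> ennreal (snd p) < h (fst p)}"
  have P: "Measurable.pred (lborel \<Otimes>\<^sub>M lborel) (\<lambda>p::real\<times>real. 0 < snd p \<and> ennreal (snd p) < h (fst p))" by measurable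
  have S[measurable]: "?S \<in> sets (lborel \<Otimes>\<^sub>M lborel)" using P unfolding pred_def by (simp add: space_pair_measure)
  have "(\<integral>\<^sup>+x. h x \<partial>lborel) = (\<integral>\<^sup>+x. \<integral>\<^sup>+t. indicator ?S (x,t) \<partial>lborel \<partial>lborel)"
  proof (rule nn_integral_cong)
    fix x
    have "(\<integral>\<^sup>+t. indicator ?S (x,t) \<partial>lborel) = (\<integral>\<^sup>+t. indicator {t. 0 < t \<and> ennreal t < h x} t \<partial>lborel)"
      by (auto intro!: nn_integral_cong simp: indicator_def)
    also have "\<dots> = h x" by (subst nn_integral_indicator) (auto simp: emeasure_pos_less)
    finally show "h x = (\<integral>\<^sup>+t. indicator ?S (x,t) \<partial>lborel)" by simp
  qed
  also have "\<dots> = (\<integral>\<^sup>+t. \<integral>\<^sup>+x. indicator ?S (x,t) \<partial>lborel \<partial>lborel)"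
    by (rule lborel_pair.Fubini') measurable
  also have "\<dots> = (\<integral>\<^sup>+t. indicator {0<..} t * emeasure lborel {x. ennreal t < h x} \<partial>lborel)"
  proof (rule nn_integral_cong)
    fix t
    have "(\<integral>\<^sup>+x. indicator ?S (x,t) \<partial>lborel) = (\<integral>\<^sup>+x. indicator {0<..} t * indicator {x. ennreal t < h x} x \<partial>lborel)"
      by (auto intro!: nn_integral_cong simp: indicator_def)
    also have "\<dots> = indicator {0<..} t * emeasure lborel {x. ennreal t < h x}"
      by (subst nn_integral_cmult) auto
    finally show "(\<integral>\<^sup>+x. indicator ?S (x,t) \<partial>lborel) = indicator {0<..} t * emeasure lborel {x. ennreal t < h x}" .
  qed
  finally show ?thesis .
qed

lemma emeasure_lebesgue_borel: "A \<in> sets borel \<Longrightarrow> emeasure lebesgue A = emeasure lborel A"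
  by simp

lemma affine_image_borel:
  fixes A :: "real set"
  assumes "A \<in> sets borel" "a \<noteq> 0"
  shows "(\<lambda>x. a*x + c) ` A \<in> sets borel"
proof -
  have "(\<lambda>x. a*x + c) ` A = (\<lambda>y. (y - c)/a) -` A"
  proof (intro set_eqI iffI)
    fix y assume "y \<in> (\<lambda>y. (y - c)/a) -` A"
    then have "(y - c)/a \<in> A" "y = a * ((y - c)/a) + c" using assms(2) by auto
    then show "y \<in> (\<lambda>x. a*x + c) ` A" by (metis image_eqI)
  qed (use assms(2) in auto)
  also have "\<dots> \<in> sets borel"
  proof -
    have m: "(\<lambda>y::real. (y - c)/a) \<in> borel \<rightarrow>\<^sub>M borel" by measurable
    show ?thesis using measurable_sets[OF m assms(1)] by simp
  qed
  finally show ?thesis .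
qed

lemma emeasure_affine_image:
  fixes A :: "real set"
  assumes "A \<in> sets borel" "a > 0"
  shows "emeasure lborel ((\<lambda>x. a*x + c) ` A) = ennreal a * emeasure lborel A"
proof -
  have "emeasure lborel ((\<lambda>x. a*x + c) ` A) = emeasure lebesgue ((\<lambda>x. a*x + c) ` A)"
    using affine_image_borel[OF assms(1), of a c] assms by simp
  also have "\<dots> = ennreal a * emeasure lebesgue A"
    using emeasure_lebesgue_affine[of a c A] assms by simp
  also have "\<dots> = ennreal a * emeasure lborel A" using assms by simp
  finally show ?thesis .
qed

lemma BM1:
  fixes A B C :: "real set"
  assumes AB: "A \<in> sets borel" "B \<in> sets borel" "C \<in> sets borel"
    and ne: "A \<noteq> {}" "B \<noteq> {}" and bd: "bdd_above A" "bdd_below B"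
    and al: "0 < \<alpha>" "\<alpha> < 1"
    and sub: "\<And>x y. x \<in> A \<Longrightarrow> y \<in> B \<Longrightarrow> \<alpha>*x + (1-\<alpha>)*y \<in> C"
  shows "ennreal \<alpha> * emeasure lborel A + ennreal (1-\<alpha>) * emeasure lborel B \<le> emeasure lborel C"
proof (rule ennreal_le_epsilon)
  fix e :: real assume e: "0 < e"
  define a0 where "a0 = Sup A"
  define b0 where "b0 = Inf B"
  have "a0 - e < Sup A" using e a0_def by simp
  then obtain a1 where a1: "a1 \<in> A" "a0 - e < a1" using less_cSup_iff[OF ne(1) bd(1)] by blast
  have "Inf B < b0 + e" using e b0_def by simp
  then obtain b1 where b1: "b1 \<in> B" "b1 < b0 + e" using cInf_less_iff[OF ne(2) bd(2)] by blast
  have xa0: "x \<le> a0" if "x \<in> A" for x using cSup_upper[OF that bd(1)] a0_def by simp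
  have yb0: "b0 \<le> y" if "y \<in> B" for y using cInf_lower[OF that bd(2)] b0_def by simp
  define A' where "A' = (\<lambda>x. \<alpha>*x + (1-\<alpha>)*b1) ` A"
  define B' where "B' = (\<lambda>y. (1-\<alpha>)*y + \<alpha>*a1) ` B"
  have A'm: "A' \<in> sets borel" unfolding A'_def using affine_image_borel[OF AB(1)] al by simp
  have B'm: "B' \<in> sets borel" unfolding B'_def using affine_image_borel[OF AB(2)] al by simp
  have eA: "emeasure lborel A' = ennreal \<alpha> * emeasure lborel A"
    unfolding A'_def using emeasure_affine_image[OF AB(1)] al by simp
  have eB: "emeasure lborel B' = ennreal (1-\<alpha>) * emeasure lborel B"
    unfolding B'_def using emeasure_affine_image[OF AB(2)] al by simp
  have "A' \<union> B' \<subseteq> C" unfolding A'_def B'_def using sub a1(1) b1(1) by (auto simp: add.commute)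
  then have U: "emeasure lborel (A' \<union> B') \<le> emeasure lborel C"
    using emeasure_mono[of "A' \<union> B'" C lborel] AB(3) by simp
  have "A' \<inter> B' \<subseteq> {\<alpha>*a1 + (1-\<alpha>)*b0 .. \<alpha>*a0 + (1-\<alpha>)*b1}"
  proof
    fix z assume z: "z \<in> A' \<inter> B'"
    then obtain x where x: "x \<in> A" "z = \<alpha>*x + (1-\<alpha>)*b1" unfolding A'_def by auto
    obtain y where y: "y \<in> B" "z = (1-\<alpha>)*y + \<alpha>*a1" using z unfolding B'_def by auto
    have "\<alpha>*x \<le> \<alpha>*a0" using xa0[OF x(1)] al by simp
    moreover have "(1-\<alpha>)*b0 \<le> (1-\<alpha>)*y" using yb0[OF y(1)] al by simp
    ultimately show "z \<in> {\<alpha>*a1 + (1-\<alpha>)*b0 .. \<alpha>*a0 + (1-\<alpha>)*b1}" using x y by auto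
  qed
  then have "emeasure lborel (A' \<inter> B') \<le> emeasure lborel {\<alpha>*a1 + (1-\<alpha>)*b0 .. \<alpha>*a0 + (1-\<alpha>)*b1}"
    by (intro emeasure_mono) auto
  also have "\<dots> \<le> ennreal e"
  proof -
    have "\<alpha>*a0 + (1-\<alpha>)*b1 - (\<alpha>*a1 + (1-\<alpha>)*b0) = \<alpha>*(a0 - a1) + (1-\<alpha>)*(b1-b0)" by algebra
    also have "\<dots> \<le> \<alpha>*e + (1-\<alpha>)*e"
      using a1 b1 al by (intro add_mono mult_left_mono) auto
    finally show ?thesis using e by (auto simp: emeasure_lborel_Icc_eq algebra_simps ennreal_le_iff)
  qed
  finally have I: "emeasure lborel (A' \<inter> B') \<le> ennreal e" .
  have "ennreal \<alpha> * emeasure lborel A + ennreal (1-\<alpha>) * emeasure lborel B = emeasure lborel (A' \<union> B') + emeasure lborel (A' \<inter> B')"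
    using emeasure_Un_Int[of A' lborel B'] A'm B'm eA eB by simp
  also have "\<dots> \<le> emeasure lborel C + ennreal e" using U I by (rule add_mono)
  finally show "ennreal \<alpha> * emeasure lborel A + ennreal (1-\<alpha>) * emeasure lborel B \<le> emeasure lborel C + ennreal e" .
qed

lemma emeasure_as_int: "A \<in> sets borel \<Longrightarrow> emeasure lborel A = (\<integral>\<^sup>+x. indicator A x \<partial>lborel)"
  by simp

lemma meas_level_less:
  fixes f :: "real \<Rightarrow> ennreal"
  assumes [measurable]: "f \<in> borel_measurable borel"
  shows "(\<lambda>t::real. emeasure lborel {x. ennreal (t*q) < f x}) \<in> borel_measurable borel"
proof -
  have "(\<lambda>t::real. \<integral>\<^sup>+x. indicator {x. ennreal (t*q) < f x} x \<partial>lborel) \<in> borel_measurable borel"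
    by measurable
  moreover have "{x. ennreal (t*q) < f x} \<in> sets borel" for t by measurable
  ultimately show ?thesis by simp
qed

lemma level_integral_scaled:
  fixes f :: "real \<Rightarrow> ennreal"
  assumes [measurable]: "f \<in> borel_measurable borel" and fa: "\<And>x. f x \<le> ennreal a"
    and a: "0 < a" and k: "0 < k"
  shows "(\<integral>\<^sup>+t. indicator {0<..<k} t * emeasure lborel {x. ennreal (t/k*a) < f x} \<partial>lborel)
      = ennreal (k/a) * (\<integral>\<^sup>+x. f x \<partial>lborel)"
proof -
  define F where "F s = indicator {0<..<a} s * emeasure lborel {x. ennreal s < f x}" for s :: real
  have Fm[measurable]: "F \<in> borel_measurable borel"
    unfolding F_def using meas_level_less[of f 1] by simp
  have "(\<integral>\<^sup>+x. f x \<partial>lborel) = (\<integral>\<^sup>+s. F s \<partial>lborel)"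
    unfolding layer_less[OF assms(1)]
  proof (rule nn_integral_cong)
    fix s :: real
    show "indicator {0<..} s * emeasure lborel {x. ennreal s < f x} = F s"
    proof (cases "s < a")
      case False
      then have "{x. ennreal s < f x} = {}" using fa
        by (auto simp: not_less) (metis ennreal_leI leD order.trans)
      then show ?thesis by (simp add: F_def)
    qed (auto simp: F_def indicator_def)
  qed
  also have "\<dots> = ennreal (a/k) * (\<integral>\<^sup>+t. F (0 + (a/k) * t) \<partial>lborel)"
    using nn_integral_real_affine[OF Fm, of "a/k" 0] a k by simp
  also have "(\<integral>\<^sup>+t. F (0 + (a/k) * t) \<partial>lborel) = (\<integral>\<^sup>+t. indicator {0<..<k} t * emeasure lborel {x. ennreal (t/k*a) < f x} \<partial>lborel)"
  proof (rule nn_integral_cong)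
    fix t :: real
    have "(0 < a/k*t \<and> a/k*t < a) \<longleftrightarrow> (0 < t \<and> t < k)" using a k
      by (auto simp: field_simps zero_less_mult_iff)
    then show "F (0 + (a/k) * t) = indicator {0<..<k} t * emeasure lborel {x. ennreal (t/k*a) < f x}"
      by (auto simp: F_def indicator_def mult.commute)
  qed
  finally have "(\<integral>\<^sup>+x. f x \<partial>lborel) = ennreal (a/k) * (\<integral>\<^sup>+t. indicator {0<..<k} t * emeasure lborel {x. ennreal (t/k*a) < f x} \<partial>lborel)" .
  then have "ennreal (k/a) * (\<integral>\<^sup>+x. f x \<partial>lborel) = ennreal (k/a) * ennreal (a/k) * (\<integral>\<^sup>+t. indicator {0<..<k} t * emeasure lborel {x. ennreal (t/k*a) < f x} \<partial>lborel)"
    by (simp add: mult.assoc)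
  also have "ennreal (k/a) * ennreal (a/k) = 1" using a k by (simp flip: ennreal_mult)
  finally show ?thesis by simp
qed

lemma SUP_pos_real:
  fixes f :: "real \<Rightarrow> ennreal"
  assumes fB: "\<And>x. f x \<le> ennreal K" and pos: "0 < (\<integral>\<^sup>+x. f x \<partial>lborel)"
  obtains a where "(SUP x. f x) = ennreal a" "0 < a" "\<And>x. f x \<le> ennreal a"
proof -
  have "(SUP x. f x) \<le> ennreal K" using fB by (simp add: SUP_le_iff)
  then obtain a where a: "(SUP x. f x) = ennreal a" "0 \<le> a"
    by (metis ennreal_cases ennreal_less_top infinity_ennreal_def le_less_trans less_le)
  have "a \<noteq> 0"
  proof
    assume "a = 0"
    then have "f x = 0" for x using a by (metis SUP_upper UNIV_I ennreal_0 le_zero_eq)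
    then show False using pos by simp
  qed
  moreover have "f x \<le> ennreal a" for x using a by (metis SUP_upper UNIV_I)
  ultimately show ?thesis using that a by auto
qed

lemma PL1b:
  fixes f g h :: "real \<Rightarrow> ennreal"
  assumes [measurable]: "f \<in> borel_measurable borel" "g \<in> borel_measurable borel" "h \<in> borel_measurable borel"
    and al: "0 < \<alpha>" "\<alpha> < 1"
    and H: "\<And>x y c d. 0 < c \<Longrightarrow> 0 < d \<Longrightarrow> ennreal c < f x \<Longrightarrow> ennreal d < g y \<Longrightarrow>
              ennreal (c powr \<alpha> * d powr (1-\<alpha>)) \<le> h (\<alpha>*x + (1-\<alpha>)*y)"
    and fB: "\<And>x. f x \<le> ennreal K" and gB: "\<And>x. g x \<le> ennreal K"
    and fS: "\<And>x. K < x \<Longrightarrow> f x = 0" and gS: "\<And>x. x < -K \<Longrightarrow> g x = 0"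
    and c: "0 < c" "ennreal c < (\<integral>\<^sup>+x. f x \<partial>lborel)"
    and d: "0 < d" "ennreal d < (\<integral>\<^sup>+x. g x \<partial>lborel)"
  shows "ennreal (c powr \<alpha> * d powr (1-\<alpha>)) \<le> (\<integral>\<^sup>+x. h x \<partial>lborel)"
proof -
  have fpos: "0 < (\<integral>\<^sup>+x. f x \<partial>lborel)" using c by (metis ennreal_less_zero_iff less_trans)
  have gpos: "0 < (\<integral>\<^sup>+x. g x \<partial>lborel)" using d by (metis ennreal_less_zero_iff less_trans)
  obtain a where a: "(SUP x. f x) = ennreal a" "0 < a" "\<And>x. f x \<le> ennreal a"
    using SUP_pos_real[OF fB fpos] by blast
  obtain b where b: "(SUP x. g x) = ennreal b" "0 < b" "\<And>x. g x \<le> ennreal b"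
    using SUP_pos_real[OF gB gpos] by blast
  define k where "k = a powr \<alpha> * b powr (1-\<alpha>)"
  have k: "0 < k" using a b by (simp add: k_def)
  define A where "A t = {x. ennreal (t/k*a) < f x}" for t
  define B where "B t = {x. ennreal (t/k*b) < g x}" for t
  define C where "C t = {x. ennreal t \<le> h x}" for t
  have key: "ennreal \<alpha> * emeasure lborel (A t) + ennreal (1-\<alpha>) * emeasure lborel (B t) \<le> emeasure lborel (C t)"
    if t: "0 < t" "t < k" for t
  proof (rule BM1)
    show "A t \<in> sets borel" "B t \<in> sets borel" "C t \<in> sets borel" unfolding A_def B_def C_def by measurable
    have r: "0 < t/k" "t/k < 1" using t k by auto
    have "t/k*a < 1*a" using r a by (intro mult_strict_right_mono) auto
    then have "ennreal (t/k*a) < ennreal a" using r a by (intro ennreal_lessI) auto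
    then show "A t \<noteq> {}" unfolding A_def using a(1) by (metis (mono_tags, lifting) empty_Collect_eq less_SUP_iff)
    have "t/k*b < 1*b" using r b by (intro mult_strict_right_mono) auto
    then have "ennreal (t/k*b) < ennreal b" using r b by (intro ennreal_lessI) auto
    then show "B t \<noteq> {}" unfolding B_def using b(1) by (metis (mono_tags, lifting) empty_Collect_eq less_SUP_iff)
    show "bdd_above (A t)" unfolding A_def bdd_above_def
      by (rule exI[of _ K]) (metis (mono_tags, lifting) fS mem_Collect_eq not_le not_less_zero)
    show "bdd_below (B t)" unfolding B_def bdd_below_def
      by (rule exI[of _ "-K"]) (metis (mono_tags, lifting) gS mem_Collect_eq not_le not_less_zero)
    show "0 < \<alpha>" "\<alpha> < 1" by fact+
    fix x y assume xy: "x \<in> A t" "y \<in> B t"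
    have "ennreal ((t/k*a) powr \<alpha> * (t/k*b) powr (1-\<alpha>)) \<le> h (\<alpha>*x + (1-\<alpha>)*y)"
      using xy r a b k t by (intro H) (auto simp: A_def B_def)
    also have "(t/k*a) powr \<alpha> * (t/k*b) powr (1-\<alpha>) = t"
    proof -
      obtain r where rr: "r = t/k" "0 < r" using r by blast
      have "(r*a) powr \<alpha> * (r*b) powr (1-\<alpha>) = (r powr \<alpha> * r powr (1-\<alpha>)) * k"
        using rr(2) a b unfolding k_def by (simp add: powr_mult)
      also have "r powr \<alpha> * r powr (1-\<alpha>) = r" using rr(2) by (simp flip: powr_add)
      finally show ?thesis using k rr(1) by simp
    qed
    finally show "\<alpha>*x + (1-\<alpha>)*y \<in> C t" by (simp add: C_def)
  qed
  have Am: "(\<lambda>t. emeasure lborel (A t)) \<in> borel_measurable borel"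
    unfolding A_def using meas_level_less[of f "a/k"] by (simp add: field_simps)
  have Bm: "(\<lambda>t. emeasure lborel (B t)) \<in> borel_measurable borel"
    unfolding B_def using meas_level_less[of g "b/k"] by (simp add: field_simps)
  have "(\<integral>\<^sup>+x. h x \<partial>lborel) = (\<integral>\<^sup>+t. indicator {0<..} t * emeasure lborel (C t) \<partial>lborel)"
    unfolding C_def by (rule layer_ge) measurable
  also have "\<dots> \<ge> (\<integral>\<^sup>+t. indicator {0<..<k} t * (ennreal \<alpha> * emeasure lborel (A t) + ennreal (1-\<alpha>) * emeasure lborel (B t)) \<partial>lborel)"
    using key by (intro nn_integral_mono) (auto simp: indicator_def)
  also have "(\<integral>\<^sup>+t. indicator {0<..<k} t * (ennreal \<alpha> * emeasure lborel (A t) + ennreal (1-\<alpha>) * emeasure lborel (B t)) \<partial>lborel)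
     = ennreal \<alpha> * (\<integral>\<^sup>+t. indicator {0<..<k} t * emeasure lborel (A t) \<partial>lborel) + ennreal (1-\<alpha>) * (\<integral>\<^sup>+t. indicator {0<..<k} t * emeasure lborel (B t) \<partial>lborel)"
    using Am Bm by (simp add: distrib_left nn_integral_add nn_integral_cmult mult.left_commute)
  also have "\<dots> = ennreal \<alpha> * (ennreal (k/a) * (\<integral>\<^sup>+x. f x \<partial>lborel)) + ennreal (1-\<alpha>) * (ennreal (k/b) * (\<integral>\<^sup>+x. g x \<partial>lborel))"
    unfolding A_def B_def using level_integral_scaled[of f a k] level_integral_scaled[of g b k] a b k by simp
  finally have I: "ennreal \<alpha> * (ennreal (k/a) * (\<integral>\<^sup>+x. f x \<partial>lborel)) + ennreal (1-\<alpha>) * (ennreal (k/b) * (\<integral>\<^sup>+x. g x \<partial>lborel)) \<le> (\<integral>\<^sup>+x. h x \<partial>lborel)" .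
  have "ennreal (\<alpha> * (k/a * c) + (1-\<alpha>) * (k/b * d)) \<le> ennreal \<alpha> * (ennreal (k/a) * (\<integral>\<^sup>+x. f x \<partial>lborel)) + ennreal (1-\<alpha>) * (ennreal (k/b) * (\<integral>\<^sup>+x. g x \<partial>lborel))"
  proof -
    have 1: "ennreal (\<alpha> * (k/a * c)) = ennreal \<alpha> * (ennreal (k/a) * ennreal c)"
      using al a k c by (simp only: ennreal_mult[symmetric] less_imp_le divide_nonneg_pos mult_nonneg_nonneg)
    have 2: "ennreal ((1-\<alpha>) * (k/b * d)) = ennreal (1-\<alpha>) * (ennreal (k/b) * ennreal d)"
      using al b k d by (simp only: ennreal_mult[symmetric] less_imp_le divide_nonneg_pos mult_nonneg_nonneg diff_ge_0_iff_ge)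
    have "ennreal (\<alpha> * (k/a * c) + (1-\<alpha>) * (k/b * d)) = ennreal (\<alpha> * (k/a * c)) + ennreal ((1-\<alpha>) * (k/b * d))"
      using al a b k c d by (intro ennreal_plus) auto
    also have "\<dots> \<le> ennreal \<alpha> * (ennreal (k/a) * (\<integral>\<^sup>+x. f x \<partial>lborel)) + ennreal (1-\<alpha>) * (ennreal (k/b) * (\<integral>\<^sup>+x. g x \<partial>lborel))"
      unfolding 1 2 using c(2) d(2) by (intro add_mono mult_left_mono) auto
    finally show ?thesis .
  qed
  moreover have "c powr \<alpha> * d powr (1-\<alpha>) \<le> \<alpha> * (k/a * c) + (1-\<alpha>) * (k/b * d)"
  proof -
    have "(c/a) powr \<alpha> * (d/b) powr (1-\<alpha>) \<le> \<alpha> * (c/a) + (1-\<alpha>) * (d/b)"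
      using Youngs_inequality_0[of \<alpha> "1-\<alpha>" "c/a" "d/b"] al a b c d by simp
    then have "k * ((c/a) powr \<alpha> * (d/b) powr (1-\<alpha>)) \<le> k * (\<alpha> * (c/a) + (1-\<alpha>) * (d/b))"
      using k by simp
    moreover have "k * ((c/a) powr \<alpha> * (d/b) powr (1-\<alpha>)) = c powr \<alpha> * d powr (1-\<alpha>)"
      using a b c d unfolding k_def by (simp add: powr_divide field_simps)
    ultimately show ?thesis by (simp add: algebra_simps)
  qed
  ultimately show ?thesis using I by (meson ennreal_leI order.trans)
qed

definition trunc :: "(real \<Rightarrow> ennreal) \<Rightarrow> nat \<Rightarrow> real \<Rightarrow> ennreal" where
  "trunc f N x = min (f x) (ennreal (real N)) * indicator {- real N .. real N} x"

lemma trunc_le: "trunc f N x \<le> f x"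
  unfolding trunc_def by (auto simp: indicator_def)

lemma trunc_meas[measurable]: "f \<in> borel_measurable borel \<Longrightarrow> trunc f N \<in> borel_measurable borel"
proof -
  assume [measurable]: "f \<in> borel_measurable borel"
  have [measurable]: "{-real N..real N} \<in> sets borel" by simp
  show ?thesis unfolding trunc_def[abs_def] by measurable
qed

lemma trunc_incseq: "incseq (\<lambda>N. trunc f N)"
proof (rule incseq_SucI, rule le_funI)
  fix N x
  have le: "ennreal (real N) \<le> ennreal (real (Suc N))" by (intro ennreal_leI) simp
  show "trunc f N x \<le> trunc f (Suc N) x"
  proof (cases "x \<in> {-real N..real N}")
    case True
    then have "x \<in> {-real (Suc N)..real (Suc N)}" by auto
    have "min (f x) (ennreal (real N)) \<le> min (f x) (ennreal (real (Suc N)))"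
      using le by (metis min.mono order_refl)
    then show ?thesis using True \<open>x \<in> {-real (Suc N)..real (Suc N)}\<close> unfolding trunc_def
      by (metis indicator_simps(1) mult_1_right)
  qed (simp add: trunc_def)
qed

lemma trunc_SUP: "(SUP N. trunc f N x) = f x"
proof (rule antisym)
  show "(SUP N. trunc f N x) \<le> f x" by (simp add: SUP_le_iff trunc_le)
  show "f x \<le> (SUP N. trunc f N x)"
    unfolding le_SUP_iff
  proof (intro allI impI)
    fix y assume y: "y < f x"
    then obtain r where r: "y = ennreal r" "0 \<le> r" by (cases y rule: ennreal_cases) auto
    obtain N :: nat where N: "max \<bar>x\<bar> (r+1) < real N" using reals_Archimedean2 by blast
    have "y < ennreal (real N)" using N r by (auto simp: ennreal_less_iff)
    then have "y < trunc f N x" using y N unfolding trunc_def by (auto simp: indicator_def)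
    then show "\<exists>i\<in>UNIV. y < trunc f i x" by blast
  qed
qed

lemma trunc_int: "f \<in> borel_measurable borel \<Longrightarrow> (\<integral>\<^sup>+x. f x \<partial>lborel) = (SUP N. \<integral>\<^sup>+x. trunc f N x \<partial>lborel)"
  using nn_integral_monotone_convergence_SUP[OF trunc_incseq, where M=lborel and f1=f] by (simp add: trunc_SUP)

lemma PL1:
  fixes f g h :: "real \<Rightarrow> ennreal"
  assumes [measurable]: "f \<in> borel_measurable borel" "g \<in> borel_measurable borel" "h \<in> borel_measurable borel"
    and al: "0 < \<alpha>" "\<alpha> < 1"
    and H: "\<And>x y c d. 0 < c \<Longrightarrow> 0 < d \<Longrightarrow> ennreal c < f x \<Longrightarrow> ennreal d < g y \<Longrightarrow>
              ennreal (c powr \<alpha> * d powr (1-\<alpha>)) \<le> h (\<alpha>*x + (1-\<alpha>)*y)"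
    and c: "0 < c" "ennreal c < (\<integral>\<^sup>+x. f x \<partial>lborel)"
    and d: "0 < d" "ennreal d < (\<integral>\<^sup>+x. g x \<partial>lborel)"
  shows "ennreal (c powr \<alpha> * d powr (1-\<alpha>)) \<le> (\<integral>\<^sup>+x. h x \<partial>lborel)"
proof -
  obtain N1 where N1: "ennreal c < (\<integral>\<^sup>+x. trunc f N1 x \<partial>lborel)"
    using c(2) unfolding trunc_int[OF assms(1)] less_SUP_iff by blast
  obtain N2 where N2: "ennreal d < (\<integral>\<^sup>+x. trunc g N2 x \<partial>lborel)"
    using d(2) unfolding trunc_int[OF assms(2)] less_SUP_iff by blast
  define N where "N = max N1 N2"
  have "(\<integral>\<^sup>+x. trunc f N1 x \<partial>lborel) \<le> (\<integral>\<^sup>+x. trunc f N x \<partial>lborel)"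
    using trunc_incseq[of f] unfolding N_def incseq_def by (intro nn_integral_mono) (auto simp: le_fun_def)
  with N1 have c': "ennreal c < (\<integral>\<^sup>+x. trunc f N x \<partial>lborel)" by order
  have "(\<integral>\<^sup>+x. trunc g N2 x \<partial>lborel) \<le> (\<integral>\<^sup>+x. trunc g N x \<partial>lborel)"
    using trunc_incseq[of g] unfolding N_def incseq_def by (intro nn_integral_mono) (auto simp: le_fun_def)
  with N2 have d': "ennreal d < (\<integral>\<^sup>+x. trunc g N x \<partial>lborel)" by order
  show ?thesis
  proof (rule PL1b[where K="real N"])
    show "trunc f N \<in> borel_measurable borel" "trunc g N \<in> borel_measurable borel" by measurable
    show "h \<in> borel_measurable borel" by measurable
    show "0 < \<alpha>" "\<alpha> < 1" by fact+
    show "ennreal (c' powr \<alpha> * d' powr (1-\<alpha>)) \<le> h (\<alpha>*x + (1-\<alpha>)*y)"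
      if "0 < c'" "0 < d'" "ennreal c' < trunc f N x" "ennreal d' < trunc g N y" for x y c' d'
      using that trunc_le[of f N x] trunc_le[of g N y] by (intro H) auto
    show "trunc f N x \<le> ennreal (real N)" "trunc g N x \<le> ennreal (real N)" for x
      unfolding trunc_def by (auto simp: indicator_def)
    show "trunc f N x = 0" if "real N < x" for x using that unfolding trunc_def by (auto simp: indicator_def)
    show "trunc g N x = 0" if "x < - real N" for x using that unfolding trunc_def by (auto simp: indicator_def)
  qed (use c d c' d' in auto)
qed


definition lcE :: "'u::real_vector set \<Rightarrow> ('u \<Rightarrow> ennreal) \<Rightarrow> bool" where
  "lcE D G \<longleftrightarrow> (\<forall>u0\<in>D. \<forall>u1\<in>D. \<forall>\<alpha>::real. 0 < \<alpha> \<longrightarrow> \<alpha> < 1 \<longrightarrow> (\<forall>c d. 0 < c \<longrightarrow> 0 < d \<longrightarrow>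
     ennreal c < G u1 \<longrightarrow> ennreal d < G u0 \<longrightarrow>
     ennreal (c powr \<alpha> * d powr (1-\<alpha>)) \<le> G (\<alpha> *\<^sub>R u1 + (1-\<alpha>) *\<^sub>R u0)))"

lemma lcE_D:
  assumes "lcE D G" "u0 \<in> D" "u1 \<in> D" "0 < \<alpha>" "\<alpha> < 1" "0 < c" "0 < d" "ennreal c < G u1" "ennreal d < G u0"
  shows "ennreal (c powr \<alpha> * d powr (1-\<alpha>)) \<le> G (\<alpha> *\<^sub>R u1 + (1-\<alpha>) *\<^sub>R u0)"
  using assms unfolding lcE_def by blast

lemma lcE_comp:
  assumes "lcE D G" and LD: "\<And>u. u \<in> D' \<Longrightarrow> L u \<in> D"
    and Ll: "\<And>u0 u1 \<alpha>. u0 \<in> D' \<Longrightarrow> u1 \<in> D' \<Longrightarrow> L (\<alpha> *\<^sub>R u1 + (1-\<alpha>) *\<^sub>R u0) = \<alpha> *\<^sub>R L u1 + (1-\<alpha>) *\<^sub>R L u0"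
  shows "lcE D' (\<lambda>u. G (L u))"
  unfolding lcE_def
proof (intro ballI allI impI)
  fix u0 u1 \<alpha> c d assume *: "u0 \<in> D'" "u1 \<in> D'" "0 < (\<alpha>::real)" "\<alpha> < 1" "0 < c" "0 < d"
    "ennreal c < G (L u1)" "ennreal d < G (L u0)"
  show "ennreal (c powr \<alpha> * d powr (1-\<alpha>)) \<le> G (L (\<alpha> *\<^sub>R u1 + (1-\<alpha>) *\<^sub>R u0))"
    unfolding Ll[OF *(1,2)] using * LD by (intro lcE_D[OF assms(1)]) auto
qed

lemma marg1:
  fixes G :: "real \<Rightarrow> 'w::real_vector \<Rightarrow> ennreal"
  assumes lc: "lcE (UNIV \<times> D) (\<lambda>(s,w). G s w)" and cD: "convex D"
    and meas: "\<And>w. w \<in> D \<Longrightarrow> (\<lambda>s. G s w) \<in> borel_measurable borel"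
  shows "lcE D (\<lambda>w. \<integral>\<^sup>+s. G s w \<partial>lborel)"
  unfolding lcE_def
proof (intro ballI allI impI)
  fix w0 w1 \<alpha> c d assume *: "w0 \<in> D" "w1 \<in> D" "0 < (\<alpha>::real)" "\<alpha> < 1" "0 < c" "0 < d"
    "ennreal c < (\<integral>\<^sup>+s. G s w1 \<partial>lborel)" "ennreal d < (\<integral>\<^sup>+s. G s w0 \<partial>lborel)"
  have wa: "\<alpha> *\<^sub>R w1 + (1-\<alpha>) *\<^sub>R w0 \<in> D" using cD * unfolding convex_def by auto
  show "ennreal (c powr \<alpha> * d powr (1-\<alpha>)) \<le> (\<integral>\<^sup>+s. G s (\<alpha> *\<^sub>R w1 + (1-\<alpha>) *\<^sub>R w0) \<partial>lborel)"
  proof (rule PL1[where f="\<lambda>s. G s w1" and g="\<lambda>s. G s w0"])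
    show "(\<lambda>s. G s w1) \<in> borel_measurable borel" "(\<lambda>s. G s w0) \<in> borel_measurable borel"
      "(\<lambda>s. G s (\<alpha> *\<^sub>R w1 + (1-\<alpha>) *\<^sub>R w0)) \<in> borel_measurable borel"
      using meas * wa by auto
    fix x y c' d' assume **: "0 < c'" "0 < d'" "ennreal c' < G x w1" "ennreal d' < G y w0"
    have "ennreal (c' powr \<alpha> * d' powr (1-\<alpha>)) \<le> (\<lambda>(s,w). G s w) (\<alpha> *\<^sub>R (x,w1) + (1-\<alpha>) *\<^sub>R (y,w0))"
      using * ** by (intro lcE_D[OF lc]) auto
    then show "ennreal (c' powr \<alpha> * d' powr (1-\<alpha>)) \<le> G (\<alpha>*x + (1-\<alpha>)*y) (\<alpha> *\<^sub>R w1 + (1-\<alpha>) *\<^sub>R w0)"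
      by simp
  qed (use * in auto)
qed


definition upd :: "'a::euclidean_space \<Rightarrow> 'a set \<Rightarrow> ('a \<Rightarrow> real) \<Rightarrow> 'a" where
  "upd y I z = y + (\<Sum>b\<in>I. (z b - y \<bullet> b) *\<^sub>R b)"

lemma upd_meas:
  assumes "finite I"
  shows "(\<lambda>p. upd (fst p) I (snd p)) \<in> (borel \<Otimes>\<^sub>M PiM I (\<lambda>_. lborel)) \<rightarrow>\<^sub>M borel"
  unfolding upd_def
proof (intro borel_measurable_add borel_measurable_sum)
  show "fst \<in> borel_measurable (borel \<Otimes>\<^sub>M PiM I (\<lambda>_. lborel))" by measurable
  fix b assume b: "b \<in> I"
  have [measurable]: "(\<lambda>x. x b) \<in> PiM I (\<lambda>_. lborel) \<rightarrow>\<^sub>M borel"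
    using measurable_component_singleton[OF b, of "\<lambda>_. lborel"] by simp
  show "(\<lambda>p. (snd p b - fst p \<bullet> b) *\<^sub>R b) \<in> borel_measurable (borel \<Otimes>\<^sub>M PiM I (\<lambda>_. lborel))"
    by measurable
qed

lemma marg_meas:
  fixes g :: "'a::euclidean_space \<Rightarrow> ennreal"
  assumes "finite I" and [measurable]: "g \<in> borel_measurable borel"
  shows "(\<lambda>y. \<integral>\<^sup>+z. g (upd y I z) \<partial>PiM I (\<lambda>_. lborel)) \<in> borel_measurable borel"
proof -
  interpret product_sigma_finite "\<lambda>_. lborel" by standard
  interpret finite_product_sigma_finite "\<lambda>_. lborel" I by standard fact
  have [measurable]: "(\<lambda>p. upd (fst p) I (snd p)) \<in> (borel \<Otimes>\<^sub>M PiM I (\<lambda>_. lborel)) \<rightarrow>\<^sub>M borel"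
    by (rule upd_meas) fact
  have "(\<lambda>(y,z). g (upd y I z)) \<in> borel_measurable (borel \<Otimes>\<^sub>M PiM I (\<lambda>_. lborel))"
    using measurable_comp[OF upd_meas[OF assms(1)] assms(2)] by (simp add: case_prod_beta comp_def)
  then show ?thesis by (rule borel_measurable_nn_integral)
qed

lemma upd_meas2:
  assumes "finite I"
  shows "(\<lambda>z. upd y I z) \<in> PiM I (\<lambda>_. lborel) \<rightarrow>\<^sub>M borel"
  unfolding upd_def
proof (intro borel_measurable_add borel_measurable_sum)
  fix b assume b: "b \<in> I"
  have [measurable]: "(\<lambda>x. x b) \<in> PiM I (\<lambda>_. lborel) \<rightarrow>\<^sub>M borel"
    using measurable_component_singleton[OF b, of "\<lambda>_. lborel"] by simp
  show "(\<lambda>z. (z b - y \<bullet> b) *\<^sub>R b) \<in> borel_measurable (PiM I (\<lambda>_. lborel))"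
    by measurable
qed simp

lemma lcE_cong:
  assumes "lcE D G" "\<And>u. u \<in> D \<Longrightarrow> G u = G' u" "convex D"
  shows "lcE D G'"
  unfolding lcE_def
proof (intro ballI allI impI)
  fix u0 u1 \<alpha> c d assume *: "u0 \<in> D" "u1 \<in> D" "0 < (\<alpha>::real)" "\<alpha> < 1" "0 < c" "0 < d"
    "ennreal c < G' u1" "ennreal d < G' u0"
  have "\<alpha> *\<^sub>R u1 + (1-\<alpha>) *\<^sub>R u0 \<in> D" using assms(3) * unfolding convex_def by auto
  then show "ennreal (c powr \<alpha> * d powr (1-\<alpha>)) \<le> G' (\<alpha> *\<^sub>R u1 + (1-\<alpha>) *\<^sub>R u0)"
    using * assms(2)[symmetric] lcE_D[OF assms(1)] by metis
qed

lemma upd_empty: "upd y {} z = y" by (simp add: upd_def)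

lemma upd_insert:
  assumes "finite I" "i \<in> Basis" "I \<subseteq> Basis" "i \<notin> I"
  shows "upd y (insert i I) (z(i:=s)) = upd (y + (s - y \<bullet> i) *\<^sub>R i) I z"
proof -
  have "upd y (insert i I) (z(i:=s)) = y + (s - y \<bullet> i) *\<^sub>R i + (\<Sum>b\<in>I. (z b - y \<bullet> b) *\<^sub>R b)"
    unfolding upd_def using assms
    by (simp add: sum.insert add.assoc) (intro sum.cong, auto)
  also have "(\<Sum>b\<in>I. (z b - y \<bullet> b) *\<^sub>R b) = (\<Sum>b\<in>I. (z b - (y + (s - y \<bullet> i) *\<^sub>R i) \<bullet> b) *\<^sub>R b)"
  proof (intro sum.cong refl)
    fix b assume b: "b \<in> I"
    then have "i \<bullet> b = 0" using assms by (metis inner_not_same_Basis subsetD)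
    then show "(z b - y \<bullet> b) *\<^sub>R b = (z b - (y + (s - y \<bullet> i) *\<^sub>R i) \<bullet> b) *\<^sub>R b"
      by (simp add: inner_add_left)
  qed
  finally show ?thesis unfolding upd_def by simp
qed

lemma margI:
  fixes G :: "'a::euclidean_space \<Rightarrow> 'v::real_vector \<Rightarrow> ennreal"
  assumes "finite I" "I \<subseteq> Basis" and lc: "lcE (UNIV \<times> D) (\<lambda>(y,v). G y v)" and cD: "convex D"
    and meas: "\<And>v. v \<in> D \<Longrightarrow> (\<lambda>y. G y v) \<in> borel_measurable borel"
  shows "lcE (UNIV \<times> D) (\<lambda>(y,v). \<integral>\<^sup>+z. G (upd y I z) v \<partial>PiM I (\<lambda>_. lborel))"
  using assms(1,2)
proof (induction I)
  case empty
  interpret product_sigma_finite "\<lambda>_. lborel" by standard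
  show ?case using lc by (rule lcE_cong) (auto simp: upd_empty space_PiM_empty intro: convex_Times cD)
next
  case (insert i I)
  interpret product_sigma_finite "\<lambda>_. lborel" by standard
  define H where "H y v = (\<integral>\<^sup>+z. G (upd y I z) v \<partial>PiM I (\<lambda>_. lborel))" for y v
  have IH: "lcE (UNIV \<times> D) (\<lambda>(y,v). H y v)" using insert by (simp add: H_def)
  have Hm: "(\<lambda>y. H y v) \<in> borel_measurable borel" if "v \<in> D" for v
    unfolding H_def using marg_meas[OF insert(1) meas[OF that]] .
  define G' where "G' s w = H (fst w + (s - fst w \<bullet> i) *\<^sub>R i) (snd w)" for s :: real and w :: "'a \<times> 'v"
  have lc': "lcE (UNIV \<times> (UNIV \<times> D)) (\<lambda>(s,w). G' s w)"
  proof -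
    have "lcE (UNIV \<times> (UNIV \<times> D)) (\<lambda>u. (\<lambda>(y,v). H y v) ((\<lambda>(s,w). (fst w + (s - fst w \<bullet> i) *\<^sub>R i, snd w)) u))"
      by (rule lcE_comp[OF IH]) (auto simp: algebra_simps inner_add_left)
    moreover have "(\<lambda>(s,w). G' s w) = (\<lambda>u. H (fst (snd u) + (fst u - fst (snd u) \<bullet> i) *\<^sub>R i) (snd (snd u)))"
      by (auto simp: G'_def fun_eq_iff)
    ultimately show ?thesis by (simp add: case_prod_beta)
  qed
  have m': "(\<lambda>s. G' s w) \<in> borel_measurable borel" if "w \<in> UNIV \<times> D" for w
  proof -
    have [measurable]: "(\<lambda>y. H y (snd w)) \<in> borel_measurable borel" using that Hm by auto
    show ?thesis unfolding G'_def by measurable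
  qed
  have L: "lcE (UNIV \<times> D) (\<lambda>w. \<integral>\<^sup>+s. G' s w \<partial>lborel)"
    by (rule marg1[OF lc']) (use cD m' in \<open>auto intro: convex_Times\<close>)
  have C: "convex (UNIV \<times> D)" using cD by (auto intro: convex_Times)
  show ?case
  proof (rule lcE_cong[OF L _ C])
    fix u :: "'a \<times> 'v" assume u: "u \<in> UNIV \<times> D"
    obtain y :: 'a and v :: 'v where yv: "u = (y,v)" by force
    have mG[measurable]: "(\<lambda>y. G y v) \<in> borel_measurable borel" using meas u yv by auto
    have [measurable]: "(\<lambda>z. upd y (insert i I) z) \<in> PiM (insert i I) (\<lambda>_. lborel) \<rightarrow>\<^sub>M borel"
      using upd_meas2[of "insert i I" y] insert by simp
    have "(\<integral>\<^sup>+z. G (upd y (insert i I) z) v \<partial>PiM (insert i I) (\<lambda>_. lborel))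
        = (\<integral>\<^sup>+s. \<integral>\<^sup>+z. G (upd y (insert i I) (z(i:=s))) v \<partial>PiM I (\<lambda>_. lborel) \<partial>lborel)"
      by (rule product_nn_integral_insert_rev) (use insert in auto)
    also have "\<dots> = (\<integral>\<^sup>+s. G' s u \<partial>lborel)"
      unfolding G'_def H_def yv using insert by (simp add: upd_insert)
    finally show "(\<integral>\<^sup>+s. G' s u \<partial>lborel) = (\<lambda>(y,v). \<integral>\<^sup>+z. G (upd y (insert i I) z) v \<partial>PiM (insert i I) (\<lambda>_. lborel)) u"
      using yv by simp
  qed
qed


lemma full_marg:
  fixes G :: "'a::euclidean_space \<Rightarrow> 'v::real_vector \<Rightarrow> ennreal"
  assumes lc: "lcE (UNIV \<times> D) (\<lambda>(y,v). G y v)" and cD: "convex D"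
    and meas: "\<And>v. v \<in> D \<Longrightarrow> (\<lambda>y. G y v) \<in> borel_measurable borel"
  shows "lcE D (\<lambda>v. \<integral>\<^sup>+x. G x v \<partial>lborel)"
proof -
  have L: "lcE (UNIV \<times> D) (\<lambda>(y,v). \<integral>\<^sup>+z. G (upd y Basis z) v \<partial>PiM Basis (\<lambda>_. lborel))"
    by (rule margI[OF _ _ lc cD meas]) auto
  have eq: "(\<integral>\<^sup>+z. G (upd y Basis z) v \<partial>PiM Basis (\<lambda>_. lborel)) = (\<integral>\<^sup>+x. G x v \<partial>lborel)"
    if v: "v \<in> D" for y v
  proof -
    have [measurable]: "(\<lambda>y. G y v) \<in> borel_measurable borel" using meas v .
    have u: "upd y Basis z = (\<Sum>b\<in>Basis. z b *\<^sub>R b)" for z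
    proof -
      have "upd y Basis z = y - (\<Sum>b\<in>Basis. (y \<bullet> b) *\<^sub>R b) + (\<Sum>b\<in>Basis. z b *\<^sub>R b)"
        unfolding upd_def by (simp add: scaleR_diff_left sum_subtractf algebra_simps)
      then show ?thesis by (simp add: euclidean_representation)
    qed
    have "(\<integral>\<^sup>+x. G x v \<partial>lborel) = (\<integral>\<^sup>+x. G x v \<partial>distr (\<Pi>\<^sub>M b\<in>Basis. lborel) borel (\<lambda>f. \<Sum>b\<in>Basis. f b *\<^sub>R b))"
      by (subst lborel_eq) simp
    also have "\<dots> = (\<integral>\<^sup>+z. G (\<Sum>b\<in>Basis. z b *\<^sub>R b) v \<partial>PiM Basis (\<lambda>_. lborel))"
      by (subst nn_integral_distr) auto
    finally show ?thesis by (simp add: u)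
  qed
  have L2: "lcE (UNIV \<times> D) (\<lambda>(y::'a,v). \<integral>\<^sup>+x. G x v \<partial>lborel)"
  proof (rule lcE_cong[where G="\<lambda>(y,v). \<integral>\<^sup>+z. G (upd y Basis z) v \<partial>PiM Basis (\<lambda>_. lborel)"])
    show "lcE (UNIV \<times> D) (\<lambda>(y,v). \<integral>\<^sup>+z. G (upd y Basis z) v \<partial>PiM Basis (\<lambda>_. lborel))" by (rule L)
    show "convex (UNIV \<times> D)" using cD by (auto intro: convex_Times)
    fix u assume "u \<in> (UNIV::'a set) \<times> D"
    then show "(\<lambda>(y,v). \<integral>\<^sup>+z. G (upd y Basis z) v \<partial>PiM Basis (\<lambda>_. lborel)) u = (\<lambda>(y,v). \<integral>\<^sup>+x. G x v \<partial>lborel) u"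
      using eq by auto
  qed
  have "lcE D (\<lambda>v. (\<lambda>(y,v). \<integral>\<^sup>+x. G x v \<partial>lborel) ((\<lambda>v. (0::'a, v)) v))"
    by (rule lcE_comp[OF L2]) auto
  then show ?thesis by simp
qed

lemma lcE_to_real:
  assumes lc: "lcE D E" and fin: "\<And>u. u \<in> D \<Longrightarrow> E u < \<infinity>" and cD: "convex D"
  shows "logconcave_on D (\<lambda>u. enn2real (E u))"
  unfolding logconcave_on_def
proof (intro ballI)
  fix u0 u1 \<alpha> assume u: "u0 \<in> D" "u1 \<in> D" and al: "\<alpha> \<in> {0..1::real}"
  define a where "a = enn2real (E u1)"
  define b where "b = enn2real (E u0)"
  have a0: "a \<ge> 0" "b \<ge> 0" by (auto simp: a_def b_def)
  have Ea: "E u1 = ennreal a" "E u0 = ennreal b" using fin u by (auto simp: a_def b_def less_top)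
  have "a powr \<alpha> * b powr (1 - \<alpha>) \<le> enn2real (E (\<alpha> *\<^sub>R u1 + (1 - \<alpha>) *\<^sub>R u0))"
  proof (cases "\<alpha> = 0 \<or> \<alpha> = 1")
    case True
    have ea: "enn2real (E u0) = b" "enn2real (E u1) = a" by (auto simp: a_def b_def)
    show ?thesis
    proof (cases "\<alpha> = 0")
      case True
      then show ?thesis using a0 ea by (cases "a = 0") auto
    next
      case False
      then have "\<alpha> = 1" using \<open>\<alpha> = 0 \<or> \<alpha> = 1\<close> by simp
      then show ?thesis using a0 ea by (cases "b = 0") auto
    qed
  next
    case False
    then have al': "0 < \<alpha>" "\<alpha> < 1" using al by auto
    show ?thesis
    proof (cases "a = 0 \<or> b = 0")
      case True then show ?thesis using a0 by auto
    next
      case False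
      then have ab: "0 < a" "0 < b" using a0 by auto
      have "\<alpha> *\<^sub>R u1 + (1-\<alpha>) *\<^sub>R u0 \<in> D" using cD u al unfolding convex_def by auto
      then have fa: "E (\<alpha> *\<^sub>R u1 + (1-\<alpha>) *\<^sub>R u0) < \<infinity>" by (rule fin)
      show ?thesis
      proof (rule field_le_mult_one_interval)
        fix s :: real assume s: "0 < s" "s < 1"
        have "ennreal ((s*a) powr \<alpha> * (s*b) powr (1-\<alpha>)) \<le> E (\<alpha> *\<^sub>R u1 + (1-\<alpha>) *\<^sub>R u0)"
          using s ab al' u Ea by (intro lcE_D[OF lc]) (auto simp: ennreal_less_iff)
        moreover have "(s*a) powr \<alpha> * (s*b) powr (1-\<alpha>) = s * (a powr \<alpha> * b powr (1-\<alpha>))"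
        proof -
          have "(s*a) powr \<alpha> * (s*b) powr (1-\<alpha>) = (s powr \<alpha> * s powr (1-\<alpha>)) * (a powr \<alpha> * b powr (1-\<alpha>))"
            using s ab by (simp add: powr_mult)
          also have "s powr \<alpha> * s powr (1-\<alpha>) = s" using s by (simp flip: powr_add)
          finally show ?thesis .
        qed
        ultimately have le: "ennreal (s * (a powr \<alpha> * b powr (1-\<alpha>))) \<le> E (\<alpha> *\<^sub>R u1 + (1-\<alpha>) *\<^sub>R u0)"
          by simp
        have "enn2real (ennreal (s * (a powr \<alpha> * b powr (1-\<alpha>)))) \<le> enn2real (E (\<alpha> *\<^sub>R u1 + (1-\<alpha>) *\<^sub>R u0))"
          using enn2real_mono[OF le] fa by (simp add: infinity_ennreal_def)
        moreover have "0 \<le> s * (a powr \<alpha> * b powr (1-\<alpha>))" using s by simp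
        ultimately show "s * (a powr \<alpha> * b powr (1-\<alpha>)) \<le> enn2real (E (\<alpha> *\<^sub>R u1 + (1-\<alpha>) *\<^sub>R u0))"
          by simp
      qed
    qed
  qed
  then show "enn2real (E u1) powr \<alpha> * enn2real (E u0) powr (1 - \<alpha>) \<le> enn2real (E (\<alpha> *\<^sub>R u1 + (1 - \<alpha>) *\<^sub>R u0))"
    by (simp add: a_def b_def)
qed

lemma lc_indicator:
  fixes p :: "'a::euclidean_space \<Rightarrow> real" and N :: "'v::real_vector \<Rightarrow> 'a set"
  assumes plc: "logconcave_on UNIV p" and pnn: "\<And>w. p w \<ge> 0"
    and compat: "\<And>v0 v1 w0 w1 \<alpha>. v0 \<in> D \<Longrightarrow> v1 \<in> D \<Longrightarrow> 0 < \<alpha> \<Longrightarrow> \<alpha> < 1 \<Longrightarrow> w0 \<in> N v0 \<Longrightarrow> w1 \<in> N v1 \<Longrightarrow>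
        \<alpha> *\<^sub>R w1 + (1-\<alpha>) *\<^sub>R w0 \<in> N (\<alpha> *\<^sub>R v1 + (1-\<alpha>) *\<^sub>R v0)"
  shows "lcE (UNIV \<times> D) (\<lambda>(w,v). ennreal (p w) * indicator (interior (N v)) w)"
  unfolding lcE_def
proof (intro ballI allI impI)
  fix u0 u1 :: "'a \<times> 'v" and \<alpha> c d :: real
  assume u: "u0 \<in> UNIV \<times> D" "u1 \<in> UNIV \<times> D" and al: "0 < \<alpha>" "\<alpha> < 1" and cd: "0 < c" "0 < d"
    and c: "ennreal c < (\<lambda>(w,v). ennreal (p w) * indicator (interior (N v)) w) u1"
    and d: "ennreal d < (\<lambda>(w,v). ennreal (p w) * indicator (interior (N v)) w) u0"
  obtain w0 v0 where u0: "u0 = (w0,v0)" by force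
  obtain w1 v1 where u1: "u1 = (w1,v1)" by force
  have v: "v0 \<in> D" "v1 \<in> D" using u u0 u1 by auto
  have i1: "w1 \<in> interior (N v1)" using c u1 cd by (cases "w1 \<in> interior (N v1)") auto
  then have pc: "c < p w1" using c u1 cd pnn by (simp add: ennreal_less_iff)
  have i0: "w0 \<in> interior (N v0)" using d u0 cd by (cases "w0 \<in> interior (N v0)") auto
  then have pd: "d < p w0" using d u0 cd pnn by (simp add: ennreal_less_iff)
  define wa where "wa = \<alpha> *\<^sub>R w1 + (1-\<alpha>) *\<^sub>R w0"
  define va where "va = \<alpha> *\<^sub>R v1 + (1-\<alpha>) *\<^sub>R v0"
  have "wa \<in> interior (N va)"
  proof -
    obtain e where e: "0 < e" "ball w1 e \<subseteq> N v1" using i1 by (meson mem_interior)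
    have "ball wa (\<alpha>*e) \<subseteq> N va"
    proof
      fix z assume z: "z \<in> ball wa (\<alpha>*e)"
      define z1 where "z1 = w1 + (1/\<alpha>) *\<^sub>R (z - wa)"
      have "dist w1 z1 = (1/\<alpha>) * norm (z - wa)" using al by (simp add: z1_def dist_norm)
      also have "\<dots> < e" using z al by (simp add: dist_norm norm_minus_commute field_simps)
      finally have "z1 \<in> N v1" using e by auto
      moreover have "w0 \<in> N v0" using i0 interior_subset by blast
      ultimately have "\<alpha> *\<^sub>R z1 + (1-\<alpha>) *\<^sub>R w0 \<in> N va" unfolding va_def using compat v al by blast
      moreover have "\<alpha> *\<^sub>R z1 + (1-\<alpha>) *\<^sub>R w0 = z" using al by (simp add: z1_def wa_def algebra_simps)
      ultimately show "z \<in> N va" by simp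
    qed
    then show ?thesis using al e by (meson mem_interior mult_pos_pos)
  qed
  moreover have "c powr \<alpha> * d powr (1-\<alpha>) \<le> p wa"
  proof -
    have "c powr \<alpha> * d powr (1-\<alpha>) \<le> p w1 powr \<alpha> * p w0 powr (1-\<alpha>)"
      using pc pd cd al by (intro mult_mono powr_mono2) auto
    also have "\<dots> \<le> p wa" using plc al unfolding logconcave_on_def wa_def by auto
    finally show ?thesis .
  qed
  ultimately show "ennreal (c powr \<alpha> * d powr (1-\<alpha>)) \<le> (\<lambda>(w,v). ennreal (p w) * indicator (interior (N v)) w) (\<alpha> *\<^sub>R u1 + (1-\<alpha>) *\<^sub>R u0)"
    using u0 u1 by (simp add: wa_def va_def ennreal_leI)
qed


lemma matrix_inv_eqI:
  fixes A B :: "real^'n^'n"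
  assumes "A ** B = mat 1" "B ** A = mat 1"
  shows "matrix_inv A = B"
proof -
  have ex: "\<exists>A'. A ** A' = mat 1 \<and> A' ** A = mat 1" using assms by blast
  define A' where "A' = matrix_inv A"
  have A': "A ** A' = mat 1" "A' ** A = mat 1"
    using someI_ex[OF ex] unfolding A'_def matrix_inv_def by auto
  have "A' = A' ** (A ** B)" using assms by (simp add: matrix_mul_rid)
  also have "\<dots> = (A' ** A) ** B" by (simp add: matrix_mul_assoc)
  also have "\<dots> = B" using A' by (simp add: matrix_mul_lid)
  finally show ?thesis unfolding A'_def .
qed

lemma diag_inv_mult:
  fixes L :: "real^'n^'n"
  assumes off: "\<And>i j. i \<noteq> j \<Longrightarrow> L $ i $ j = 0" and pos: "\<And>i. L $ i $ i \<noteq> 0"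
  shows "matrix_inv L *v u = (\<chi> j. u $ j / L $ j $ j)"
proof -
  define L' :: "real^'n^'n" where "L' = (\<chi> i j. if i = j then 1 / L $ i $ i else 0)"
  have Lx: "L $ i $ k = (if k = i then L $ i $ i else 0)" for i k using off by auto
  have "L ** L' = mat 1"
  proof -
    have "(L ** L') $ i $ j = (if i = j then 1 else 0)" for i j
    proof -
      have "(L ** L') $ i $ j = (\<Sum>k\<in>UNIV. L $ i $ k * L' $ k $ j)"
        by (simp add: matrix_matrix_mult_def)
      also have "\<dots> = (\<Sum>k\<in>UNIV. if k = i then L $ i $ i * L' $ i $ j else 0)"
        by (intro sum.cong refl) (subst Lx, auto)
      also have "\<dots> = L $ i $ i * L' $ i $ j" by simp
      finally show ?thesis using pos by (simp add: L'_def)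
    qed
    then show ?thesis by (simp add: vec_eq_iff mat_def)
  qed
  moreover have "L' ** L = mat 1"
  proof -
    have "(L' ** L) $ i $ j = (if i = j then 1 else 0)" for i j
    proof -
      have "(L' ** L) $ i $ j = (\<Sum>k\<in>UNIV. L' $ i $ k * L $ k $ j)"
        by (simp add: matrix_matrix_mult_def)
      also have "\<dots> = (\<Sum>k\<in>UNIV. if k = i then L' $ i $ i * L $ i $ j else 0)"
        by (intro sum.cong refl) (auto simp: L'_def)
      also have "\<dots> = L' $ i $ i * L $ i $ j" by simp
      finally show ?thesis using pos off by (simp add: L'_def)
    qed
    then show ?thesis by (simp add: vec_eq_iff mat_def)
  qed
  ultimately have "matrix_inv L = L'" by (rule matrix_inv_eqI)
  then show ?thesis
  proof -
    assume e: "matrix_inv L = L'"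
    have "(L' *v u) $ j = u $ j / L $ j $ j" for j
    proof -
      have "(L' *v u) $ j = (\<Sum>k\<in>UNIV. L' $ j $ k * u $ k)" by (simp add: matrix_vector_mult_def)
      also have "\<dots> = (\<Sum>k\<in>UNIV. if k = j then L' $ j $ j * u $ j else 0)"
        by (intro sum.cong refl) (auto simp: L'_def)
      also have "\<dots> = u $ j / L $ j $ j" by (simp add: L'_def)
      finally show ?thesis .
    qed
    then show ?thesis unfolding e by (simp add: vec_eq_iff)
  qed
qed

lemma mat_inv_mult:
  fixes u :: "real^'n"
  assumes "\<psi> \<noteq> 0"
  shows "matrix_inv (mat \<psi> :: real^'n^'n) *v u = (1/\<psi>) *\<^sub>R u"
proof -
  have "matrix_inv (mat \<psi> :: real^'n^'n) *v u = (\<chi> j. u $ j / (mat \<psi> :: real^'n^'n) $ j $ j)"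
    by (rule diag_inv_mult) (auto simp: mat_def assms)
  then show ?thesis by (simp add: vec_eq_iff mat_def)
qed

lemma emeasure_density_convex:
  fixes p :: "'a::euclidean_space \<Rightarrow> real"
  assumes pm: "p \<in> borel_measurable lborel" and cA: "convex A"
  shows "emeasure (density lebesgue (\<lambda>w. ennreal (p w))) A = (\<integral>\<^sup>+w. ennreal (p w) * indicator (interior A) w \<partial>lborel)"
proof -
  have pm': "p \<in> borel_measurable borel" using pm by simp
  have neg: "negligible (A - interior A)"
  proof (rule negligible_subset[OF negligible_convex_frontier[OF cA]])
    show "A - interior A \<subseteq> frontier A" using closure_subset by (auto simp: frontier_def)
  qed
  then have null: "A - interior A \<in> null_sets lebesgue" by (simp add: negligible_iff_null_sets)
  have io: "interior A \<in> sets lebesgue" by (simp add: borel_open sets_completionI_sets)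
  have Aeq: "A = interior A \<union> (A - interior A)" using interior_subset by blast
  have "interior A \<union> (A - interior A) \<in> sets lebesgue" by (rule sets.Un[OF io null_setsD2[OF null]])
  then have As: "A \<in> sets lebesgue" by (simp only: Aeq[symmetric])
  have fm: "(\<lambda>w. ennreal (p w)) \<in> borel_measurable lebesgue"
    using pm' by (intro measurable_completion) simp
  have "emeasure (density lebesgue (\<lambda>w. ennreal (p w))) A = (\<integral>\<^sup>+w. ennreal (p w) * indicator A w \<partial>lebesgue)"
    by (rule emeasure_density[OF fm As])
  also have "\<dots> = (\<integral>\<^sup>+w. ennreal (p w) * indicator (interior A) w \<partial>lebesgue)"
  proof (rule nn_integral_cong_AE)
    show "AE w in lebesgue. ennreal (p w) * indicator A w = ennreal (p w) * indicator (interior A) w"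
      using AE_not_in[OF null] by eventually_elim (use interior_subset in \<open>auto simp: indicator_def\<close>)
  qed
  also have "\<dots> = (\<integral>\<^sup>+w. ennreal (p w) * indicator (interior A) w \<partial>lborel)"
    by (rule nn_integral_completion)
  finally show ?thesis .
qed

lemma logconcave_on_cong:
  assumes "logconcave_on D f" "\<And>u. u \<in> D \<Longrightarrow> f u = g u" "convex D"
  shows "logconcave_on D g"
  unfolding logconcave_on_def
proof (intro ballI)
  fix u0 u1 \<alpha> assume u: "u0 \<in> D" "u1 \<in> D" "\<alpha> \<in> {0..1::real}"
  have "\<alpha> *\<^sub>R u1 + (1-\<alpha>) *\<^sub>R u0 \<in> D" using assms(3) u unfolding convex_def by auto
  then show "g u1 powr \<alpha> * g u0 powr (1 - \<alpha>) \<le> g (\<alpha> *\<^sub>R u1 + (1 - \<alpha>) *\<^sub>R u0)"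
  proof -
    have "f u1 powr \<alpha> * f u0 powr (1 - \<alpha>) \<le> f (\<alpha> *\<^sub>R u1 + (1 - \<alpha>) *\<^sub>R u0)"
      using assms(1) u unfolding logconcave_on_def by blast
    then show ?thesis using assms(2) u \<open>\<alpha> *\<^sub>R u1 + (1-\<alpha>) *\<^sub>R u0 \<in> D\<close> by simp
  qed
qed

lemma compat_convex:
  fixes N :: "'v::real_vector \<Rightarrow> 'a::real_vector set"
  assumes compat: "\<And>v0 v1 w0 w1 \<alpha>. v0 \<in> D \<Longrightarrow> v1 \<in> D \<Longrightarrow> 0 < \<alpha> \<Longrightarrow> \<alpha> < 1 \<Longrightarrow> w0 \<in> N v0 \<Longrightarrow> w1 \<in> N v1 \<Longrightarrow>
        \<alpha> *\<^sub>R w1 + (1-\<alpha>) *\<^sub>R w0 \<in> N (\<alpha> *\<^sub>R v1 + (1-\<alpha>) *\<^sub>R v0)"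
    and v: "v \<in> D"
  shows "convex (N v)"
  unfolding convex_alt
proof (intro ballI allI impI)
  fix x y and u :: real assume *: "x \<in> N v" "y \<in> N v" "0 \<le> u \<and> u \<le> 1"
  show "(1 - u) *\<^sub>R x + u *\<^sub>R y \<in> N v"
  proof (cases "u = 0 \<or> u = 1")
    case True then show ?thesis using * by auto
  next
    case False
    then have "u *\<^sub>R y + (1-u) *\<^sub>R x \<in> N (u *\<^sub>R v + (1-u) *\<^sub>R v)" using * v by (intro compat) auto
    moreover have "u *\<^sub>R v + (1-u) *\<^sub>R v = v"
    proof -
      have "u *\<^sub>R v + (1-u) *\<^sub>R v = (u + (1-u)) *\<^sub>R v" by (simp only: scaleR_add_left)
      then show ?thesis by simp
    qed
    ultimately have "u *\<^sub>R y + (1-u) *\<^sub>R x \<in> N v" by simp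
    then show ?thesis by (simp add: add.commute)
  qed
qed

lemma logconcave_likelihood_generic:
  fixes p :: "real^'n \<Rightarrow> real" and N :: "'v::real_vector \<Rightarrow> (real^'n) set"
  assumes p_meas: "p \<in> borel_measurable lborel" and p_nonneg: "\<And>w. p w \<ge> 0"
    and p_int: "integrable lborel p" and p_one: "integral\<^sup>L lborel p = 1"
    and p_lc: "logconcave_on UNIV p" and cD: "convex D"
    and compat: "\<And>v0 v1 w0 w1 \<alpha>. v0 \<in> D \<Longrightarrow> v1 \<in> D \<Longrightarrow> 0 < \<alpha> \<Longrightarrow> \<alpha> < 1 \<Longrightarrow> w0 \<in> N v0 \<Longrightarrow> w1 \<in> N v1 \<Longrightarrow>
        \<alpha> *\<^sub>R w1 + (1-\<alpha>) *\<^sub>R w0 \<in> N (\<alpha> *\<^sub>R v1 + (1-\<alpha>) *\<^sub>R v0)"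
  shows "logconcave_on D (\<lambda>v. measure (law p) (N v))"
proof -
  define E where "E v = (\<integral>\<^sup>+w. ennreal (p w) * indicator (interior (N v)) w \<partial>lborel)" for v
  have pm[measurable]: "p \<in> borel_measurable borel" using p_meas by simp
  have lc1: "lcE (UNIV \<times> D) (\<lambda>(w,v). ennreal (p w) * indicator (interior (N v)) w)"
    by (rule lc_indicator[OF p_lc p_nonneg compat])
  have lcD: "lcE D E" unfolding E_def
  proof (rule full_marg[OF lc1 cD])
    fix v
    have [measurable]: "interior (N v) \<in> sets borel" by simp
    show "(\<lambda>y. ennreal (p y) * indicator (interior (N v)) y) \<in> borel_measurable borel" by measurable
  qed
  have Eeq: "E v = emeasure (law p) (N v)" if "v \<in> D" for v
    unfolding E_def law_def using emeasure_density_convex[OF p_meas compat_convex[OF compat that]] by simp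
  have fin: "E v < \<infinity>" if "v \<in> D" for v
  proof -
    have "E v \<le> (\<integral>\<^sup>+w. ennreal (p w) \<partial>lborel)" unfolding E_def
      by (intro nn_integral_mono) (auto simp: indicator_def)
    also have "\<dots> = ennreal 1" using p_int p_nonneg p_one by (subst nn_integral_eq_integral) auto
    finally have "E v \<le> ennreal 1" .
    then show ?thesis by (metis ennreal_less_top infinity_ennreal_def le_less_trans)
  qed
  have "logconcave_on D (\<lambda>v. enn2real (E v))" by (rule lcE_to_real[OF lcD fin cD])
  then show ?thesis
    by (rule logconcave_on_cong) (auto simp: Eeq measure_def cD)
qed


lemma perspective:
  fixes C :: "'a::real_vector set"
  assumes C: "convex C" and p: "0 < \<psi>0" "0 < \<psi>1" and al: "0 < \<alpha>" "\<alpha> < 1"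
    and y1: "(1/\<psi>1) *\<^sub>R u1 \<in> C" and y0: "(1/\<psi>0) *\<^sub>R u0 \<in> C"
  shows "(1/(\<alpha>*\<psi>1 + (1-\<alpha>)*\<psi>0)) *\<^sub>R (\<alpha> *\<^sub>R u1 + (1-\<alpha>) *\<^sub>R u0) \<in> C"
proof -
  define P where "P = \<alpha>*\<psi>1 + (1-\<alpha>)*\<psi>0"
  have P: "0 < P" unfolding P_def using p al by (intro add_pos_pos mult_pos_pos) auto
  define \<theta> where "\<theta> = \<alpha>*\<psi>1/P"
  have th: "0 \<le> \<theta>" "\<theta> \<le> 1" using P p al unfolding \<theta>_def P_def by (auto simp: field_simps)
  have th1: "1 - \<theta> = (1-\<alpha>)*\<psi>0/P" using P unfolding \<theta>_def P_def by (simp add: field_simps)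
  have "\<theta> *\<^sub>R ((1/\<psi>1) *\<^sub>R u1) + (1-\<theta>) *\<^sub>R ((1/\<psi>0) *\<^sub>R u0) \<in> C"
    using C y1 y0 th unfolding convex_alt by (metis add.commute)
  moreover have "\<theta> *\<^sub>R ((1/\<psi>1) *\<^sub>R u1) + (1-\<theta>) *\<^sub>R ((1/\<psi>0) *\<^sub>R u0) = (1/P) *\<^sub>R (\<alpha> *\<^sub>R u1 + (1-\<alpha>) *\<^sub>R u0)"
    unfolding th1 using p P by (simp add: \<theta>_def scaleR_add_right)
  ultimately show ?thesis unfolding P_def by simp
qed

lemma convex_ereal_interval: "convex {t::real. a \<le> ereal t \<and> ereal t \<le> b}"
proof (rule convexI)
  fix x y u v :: real
  assume xx: "x \<in> {t::real. a \<le> ereal t \<and> ereal t \<le> b}" and yy: "y \<in> {t::real. a \<le> ereal t \<and> ereal t \<le> b}"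
    and uv: "0 \<le> u" "0 \<le> v" "u + v = 1"
  have *: "a \<le> ereal x" "ereal x \<le> b" "a \<le> ereal y" "ereal y \<le> b" "0 \<le> u" "0 \<le> v" "u + v = 1"
    using xx yy uv by auto
  have lo: "min x y \<le> u * x + v * y"
  proof -
    have "u * min x y + v * min x y \<le> u * x + v * y" using * by (intro add_mono mult_left_mono) auto
    then show ?thesis using * by (simp add: distrib_right[symmetric])
  qed
  have hi: "u * x + v * y \<le> max x y"
  proof -
    have "u * x + v * y \<le> u * max x y + v * max x y" using * by (intro add_mono mult_left_mono) auto
    then show ?thesis using * by (simp add: distrib_right[symmetric])
  qed
  have "a \<le> ereal (min x y)" using * by (simp add: min_def)
  also have "\<dots> \<le> ereal (u * x + v * y)" using lo by (simp only: ereal_less_eq(3))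
  finally have A: "a \<le> ereal (u * x + v * y)" .
  have "ereal (u * x + v * y) \<le> ereal (max x y)" using hi by (simp only: ereal_less_eq(3))
  also have "\<dots> \<le> b" using * by (simp add: max_def)
  finally have B: "ereal (u * x + v * y) \<le> b" .
  show "u *\<^sub>R x + v *\<^sub>R y \<in> {t::real. a \<le> ereal t \<and> ereal t \<le> b}" using A B by simp
qed

lemma convex_pos_diag: "convex (pos_diag_mats :: (real^'n^'n) set)"
  unfolding convex_alt
proof (intro ballI allI impI)
  fix x y :: "real^'n^'n" and u :: real
  assume x: "x \<in> pos_diag_mats" and y: "y \<in> pos_diag_mats" and u: "0 \<le> u \<and> u \<le> 1"
  have "(1-u) * x $ i $ i + u * y $ i $ i > 0" for i
  proof (cases "u = 0")
    case True then show ?thesis using x by (simp add: pos_diag_mats_def)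
  next
    case False
    then have "0 < u * y $ i $ i" using u y by (simp add: pos_diag_mats_def)
    moreover have "0 \<le> (1-u) * x $ i $ i" using u x by (simp add: pos_diag_mats_def less_imp_le)
    ultimately show ?thesis by simp
  qed
  moreover have "(1-u) * x $ i $ j + u * y $ i $ j = 0" if "i \<noteq> j" for i j
    using that x y by (simp add: pos_diag_mats_def)
  ultimately show "(1 - u) *\<^sub>R x + u *\<^sub>R y \<in> pos_diag_mats"
    by (simp add: pos_diag_mats_def)
qed

theorem theorem1:
  fixes S :: "real^'m^'n"
    and p :: "real^'n \<Rightarrow> real"
    and Q :: "real^'n \<Rightarrow> 'z::countable"
  assumes p_meas: "p \<in> borel_measurable lborel"
    and p_nonneg: "\<And>w. p w \<ge> 0"
    and p_int: "integrable lborel p"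
    and p_one: "integral\<^sup>L lborel p = 1"
    and p_logconcave: "logconcave_on UNIV p"
    and Q_convex: "convex_quantizer Q"
  shows "\<forall>z. (\<forall>\<Psi>0 \<in> pos_def_mats. logconcave_on UNIV (\<lambda>x. likelihood p Q S z x \<Psi>0))
          \<and> logconcave_on (UNIV \<times> {0<..}) (\<lambda>(x, \<psi>). likelihood p Q S z x (mat \<psi>))
          \<and> ((\<forall>z'. \<exists>a b :: 'n \<Rightarrow> ereal. (\<forall>j. a j \<le> b j) \<and>
                 Q -` {z'} = {y. \<forall>j. a j \<le> ereal (y $ j) \<and> ereal (y $ j) \<le> b j})
             \<longrightarrow> logconcave_on (UNIV \<times> pos_diag_mats) (\<lambda>(x, \<Lambda>). likelihood p Q S z x \<Lambda>))"
proof (intro allI conjI)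
  fix z
  define C where "C = Q -` {z}"
  have cC: "convex C" using Q_convex unfolding convex_quantizer_def C_def by auto
  note gen = logconcave_likelihood_generic[OF p_meas p_nonneg p_int p_one p_logconcave]
  have lin: "S *v (\<alpha> *\<^sub>R x1 + (1-\<alpha>) *\<^sub>R x0) + (\<alpha> *\<^sub>R w1 + (1-\<alpha>) *\<^sub>R w0)
      = \<alpha> *\<^sub>R (S *v x1 + w1) + (1-\<alpha>) *\<^sub>R (S *v x0 + w0)" for \<alpha> :: real and x0 x1 w0 w1
    by (simp add: matrix_vector_right_distrib matrix_vector_mult_scaleR algebra_simps)
  show "\<forall>\<Psi>0\<in>pos_def_mats. logconcave_on UNIV (\<lambda>x. likelihood p Q S z x \<Psi>0)"
  proof
    fix \<Psi>0 :: "real^'n^'n"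
    have "logconcave_on UNIV (\<lambda>x. measure (law p) (noise_region Q S z x \<Psi>0))"
    proof (rule gen)
      show "convex (UNIV :: (real^'m) set)" by simp
      fix x0 x1 :: "real^'m" and w0 w1 :: "real^'n" and \<alpha> :: real
      assume *: "w0 \<in> noise_region Q S z x0 \<Psi>0" "w1 \<in> noise_region Q S z x1 \<Psi>0" "0 < \<alpha>" "\<alpha> < 1"
      then have m: "matrix_inv \<Psi>0 *v (S *v x0 + w0) \<in> C" "matrix_inv \<Psi>0 *v (S *v x1 + w1) \<in> C"
        by (auto simp: noise_region_def C_def)
      have "\<alpha> *\<^sub>R (matrix_inv \<Psi>0 *v (S *v x1 + w1)) + (1-\<alpha>) *\<^sub>R (matrix_inv \<Psi>0 *v (S *v x0 + w0)) \<in> C"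
        using * by (intro convexD[OF cC m(2) m(1)]) auto
      then show "\<alpha> *\<^sub>R w1 + (1-\<alpha>) *\<^sub>R w0 \<in> noise_region Q S z (\<alpha> *\<^sub>R x1 + (1-\<alpha>) *\<^sub>R x0) \<Psi>0"
        unfolding noise_region_def C_def lin mem_Collect_eq
        by (simp only: matrix_vector_right_distrib matrix_vector_mult_scaleR)
    qed
    then show "logconcave_on UNIV (\<lambda>x. likelihood p Q S z x \<Psi>0)" by (simp add: likelihood_def)
  qed
  show "logconcave_on (UNIV \<times> {0<..}) (\<lambda>(x, \<psi>). likelihood p Q S z x (mat \<psi>))"
  proof -
    define N where "N v = noise_region Q S z (fst v) (mat (snd v))" for v :: "(real^'m) \<times> real"
    have memN: "w \<in> N v \<longleftrightarrow> (1 / snd v) *\<^sub>R (S *v fst v + w) \<in> C" if "snd v > 0" for v w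
      using that by (simp add: N_def noise_region_def C_def mat_inv_mult)
    have "logconcave_on (UNIV \<times> {0<..}) (\<lambda>v. measure (law p) (N v))"
    proof (rule gen)
      show "convex (UNIV \<times> {0::real<..} :: ((real^'m) \<times> real) set)" by (intro convex_Times) auto
      fix v0 v1 :: "(real^'m) \<times> real" and w0 w1 :: "real^'n" and \<alpha> :: real
      assume v: "v0 \<in> UNIV \<times> {0<..}" "v1 \<in> UNIV \<times> {0<..}" and al: "0 < \<alpha>" "\<alpha> < 1"
        and w: "w0 \<in> N v0" "w1 \<in> N v1"
      have pos: "snd v0 > 0" "snd v1 > 0" using v by auto
      have posa: "snd (\<alpha> *\<^sub>R v1 + (1-\<alpha>) *\<^sub>R v0) > 0"
        using pos al by (simp add: add_pos_pos)
      have "(1/(\<alpha> * snd v1 + (1-\<alpha>) * snd v0)) *\<^sub>R (\<alpha> *\<^sub>R (S *v fst v1 + w1) + (1-\<alpha>) *\<^sub>R (S *v fst v0 + w0)) \<in> C"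
        using w pos al memN by (intro perspective[OF cC]) auto
      then show "\<alpha> *\<^sub>R w1 + (1-\<alpha>) *\<^sub>R w0 \<in> N (\<alpha> *\<^sub>R v1 + (1-\<alpha>) *\<^sub>R v0)"
        using memN[OF posa] lin by simp
    qed
    moreover have "(\<lambda>(x, \<psi>). likelihood p Q S z x (mat \<psi>)) = (\<lambda>v. measure (law p) (N v))"
      by (auto simp: fun_eq_iff N_def likelihood_def)
    ultimately show ?thesis by simp
  qed
  show "(\<forall>z'. \<exists>a b :: 'n \<Rightarrow> ereal. (\<forall>j. a j \<le> b j) \<and>
                 Q -` {z'} = {y. \<forall>j. a j \<le> ereal (y $ j) \<and> ereal (y $ j) \<le> b j})
             \<longrightarrow> logconcave_on (UNIV \<times> pos_diag_mats) (\<lambda>(x, \<Lambda>). likelihood p Q S z x \<Lambda>)"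
  proof
    assume box: "\<forall>z'. \<exists>a b :: 'n \<Rightarrow> ereal. (\<forall>j. a j \<le> b j) \<and>
                 Q -` {z'} = {y. \<forall>j. a j \<le> ereal (y $ j) \<and> ereal (y $ j) \<le> b j}"
    then obtain a b :: "'n \<Rightarrow> ereal" where ab: "C = {y. \<forall>j. a j \<le> ereal (y $ j) \<and> ereal (y $ j) \<le> b j}"
      unfolding C_def by blast
    define I where "I j = {t::real. a j \<le> ereal t \<and> ereal t \<le> b j}" for j
    have cI: "convex (I j)" for j unfolding I_def by (rule convex_ereal_interval)
    define N where "N v = noise_region Q S z (fst v) (snd v)" for v :: "(real^'m) \<times> (real^'n^'n)"
    have memN: "w \<in> N v \<longleftrightarrow> (\<forall>j. (S *v fst v + w) $ j / snd v $ j $ j \<in> I j)" if "snd v \<in> pos_diag_mats" for v w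
    proof -
      have "matrix_inv (snd v) *v (S *v fst v + w) = (\<chi> j. (S *v fst v + w) $ j / snd v $ j $ j)"
        using that unfolding pos_diag_mats_def by (intro diag_inv_mult) (auto, metis less_irrefl)
      then show ?thesis by (simp add: N_def noise_region_def C_def[symmetric] ab I_def)
    qed
    have "logconcave_on (UNIV \<times> pos_diag_mats) (\<lambda>v. measure (law p) (N v))"
    proof (rule gen)
      show "convex (UNIV \<times> pos_diag_mats :: ((real^'m) \<times> (real^'n^'n)) set)"
        by (intro convex_Times convex_pos_diag) auto
      fix v0 v1 :: "(real^'m) \<times> (real^'n^'n)" and w0 w1 :: "real^'n" and \<alpha> :: real
      assume v: "v0 \<in> UNIV \<times> pos_diag_mats" "v1 \<in> UNIV \<times> pos_diag_mats" and al: "0 < \<alpha>" "\<alpha> < 1"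
        and w: "w0 \<in> N v0" "w1 \<in> N v1"
      have pd: "snd v0 \<in> pos_diag_mats" "snd v1 \<in> pos_diag_mats" using v by auto
      have pda: "snd (\<alpha> *\<^sub>R v1 + (1-\<alpha>) *\<^sub>R v0) \<in> pos_diag_mats"
      proof -
        have "(1 - \<alpha>) *\<^sub>R snd v0 + \<alpha> *\<^sub>R snd v1 \<in> pos_diag_mats"
          using convex_pos_diag pd al unfolding convex_alt by auto
        then show ?thesis by (simp add: add.commute)
      qed
      show "\<alpha> *\<^sub>R w1 + (1-\<alpha>) *\<^sub>R w0 \<in> N (\<alpha> *\<^sub>R v1 + (1-\<alpha>) *\<^sub>R v0)"
        unfolding memN[OF pda]
      proof
        fix j
        define u0 where "u0 = (S *v fst v0 + w0) $ j"
        define u1 where "u1 = (S *v fst v1 + w1) $ j"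
        define \<psi>0 where "\<psi>0 = snd v0 $ j $ j"
        define \<psi>1 where "\<psi>1 = snd v1 $ j $ j"
        have ps: "0 < \<psi>0" "0 < \<psi>1" using pd unfolding pos_diag_mats_def \<psi>0_def \<psi>1_def by auto
        have "(1/\<psi>1) *\<^sub>R u1 \<in> I j" "(1/\<psi>0) *\<^sub>R u0 \<in> I j"
          using w memN pd unfolding u0_def u1_def \<psi>0_def \<psi>1_def by auto
        then have "(1/(\<alpha>*\<psi>1 + (1-\<alpha>)*\<psi>0)) *\<^sub>R (\<alpha> *\<^sub>R u1 + (1-\<alpha>) *\<^sub>R u0) \<in> I j"
          using ps al by (intro perspective[OF cI]) auto
        moreover have "(S *v fst (\<alpha> *\<^sub>R v1 + (1-\<alpha>) *\<^sub>R v0) + (\<alpha> *\<^sub>R w1 + (1-\<alpha>) *\<^sub>R w0)) $ j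
            = \<alpha> *\<^sub>R u1 + (1-\<alpha>) *\<^sub>R u0"
          unfolding u0_def u1_def using lin by simp
        moreover have "snd (\<alpha> *\<^sub>R v1 + (1-\<alpha>) *\<^sub>R v0) $ j $ j = \<alpha>*\<psi>1 + (1-\<alpha>)*\<psi>0"
          unfolding \<psi>0_def \<psi>1_def by simp
        ultimately show "(S *v fst (\<alpha> *\<^sub>R v1 + (1-\<alpha>) *\<^sub>R v0) + (\<alpha> *\<^sub>R w1 + (1-\<alpha>) *\<^sub>R w0)) $ j /
            snd (\<alpha> *\<^sub>R v1 + (1-\<alpha>) *\<^sub>R v0) $ j $ j \<in> I j"
          by (simp add: divide_inverse mult.commute)
      qed
    qed
    moreover have "(\<lambda>(x, \<Lambda>). likelihood p Q S z x \<Lambda>) = (\<lambda>v. measure (law p) (N v))"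
      by (auto simp: fun_eq_iff N_def likelihood_def)
    ultimately show "logconcave_on (UNIV \<times> pos_diag_mats) (\<lambda>(x, \<Lambda>). likelihood p Q S z x \<Lambda>)"
      by simp
  qed
qed

end
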